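(* Let $G$ be a Lie group, $H\subseteq G$ a closed subgroup, and $\mathfrak{g}=\mathfrak{h}\oplus\mathfrak{m}$ a reductive decomposition. Equip $G/H$ with a $G$-invariant Riemannian metric (an $\mathrm{Ad}(H)$-invariant inner product $\langle\cdot,\cdot\rangle$ on $\mathfrak{m}$) with Levi-Civita connection $\nabla$. If $G/H$ admits a $G$-invariant Codazzi tensor field $A$ with $\nabla A\neq 0$, then the difference sectional curvature $K^d$ takes both positive and negative values, i.e. there are $2$-planes $\Pi,\Pi'\subseteq\mathfrak{m}$ with $K^d(\Pi)>0$ and $K^d(\Pi')<0$.
   Context: A reductive decomposition means $\mathfrak{m}$ is an $\mathrm{Ad}(H)$-invariant vector space complement of $\mathfrak{h}$ in $\mathfrak{g}$; $[X,Y]_{\mathfrak{m}}$ and $[X,Y]_{\mathfrak{h}}$ are the components of $[X,Y]$ in $\mathfrak{g}=\mathfrak{h}\oplus\mathfrak{m}$, and $\mathfrak{m}\cong T_{eH}(G/H)$. $G$-invariant tensor fields correspond to $\mathrm{Ad}(H)$-invariant tensors on $\mathfrak{m}$. A Codazzi tensor field is a symmetric twice-covariant tensor field $A$ with $(\nabla_XA)(Y,Z)=(\nabla_YA)(X,Z)$ for all vector fields. The Levi-Civita product $\alpha:\mathfrak{m}\times\mathfrak{m}\to\mathfrak{m}$ is defined by $2\langle\alpha(X,Y),Z\rangle=\langle[X,Y]_{\mathfrak{m}},Z\rangle-\langle X,[Y,Z]_{\mathfrak{m}}\rangle-\langle[X,Z]_{\mathfrak{m}},Y\rangle$. The Riemann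 curvature of the metric at $eH$ is $R(X,Y)Z=\alpha(X,\alpha(Y,Z))-\alpha(Y,\alpha(X,Z))-\alpha([X,Y]_{\mathfrak{m}},Z)-[[X,Y]_{\mathfrak{h}},Z]$, and the curvature of the canonical connection of the second kind $\nabla^0$ (the $G$-invariant connection corresponding to the zero product on $\mathfrak{m}$) is $R^0(X,Y)Z=-[[X,Y]_{\mathfrak{h}},Z]$, for $X,Y,Z\in\mathfrak{m}$. The difference curvature tensor is $R^d=R-R^0$, i.e. $R^d(X,Y)Z=\alpha(X,\alpha(Y,Z))-\alpha(Y,\alpha(X,Z))-\alpha([X,Y]_{\mathfrak{m}},Z)$. For a $2$-plane $\Pi\subseteq\mathfrak{m}$ with orthonormal basis $\{X,Y\}$, $K^d(\Pi)=\langle R^d(X,Y)Y,X\rangle=K(\Pi)-K^0(\Pi)$, where $K$ is the sectional curvature of the metric and $K^0(\Pi)=\langle R^0(X,Y)Y,X\rangle$ (independent of the orthonormal basis). *)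

theory Defs
  imports "HOL-Analysis.Analysis"
begin

text \<open>Infinitesimal data of a reductive homogeneous space G/H with G-invariant metric.\<close>

definition lie_bracket :: "('g::real_vector \<Rightarrow> 'g \<Rightarrow> 'g) \<Rightarrow> bool" where
  "lie_bracket br \<longleftrightarrow> bilinear br \<and> (\<forall>x y. br x y = - br y x) \<and>
     (\<forall>x y z. br x (br y z) + br y (br z x) + br z (br x y) = 0)"

definition reductive_decomp :: "('g::real_vector \<Rightarrow> 'g \<Rightarrow> 'g) \<Rightarrow> 'g set \<Rightarrow> 'g set \<Rightarrow> bool" where
  "reductive_decomp br h m \<longleftrightarrow> subspace h \<and> subspace m \<and> h \<inter> m = {0} \<and>
     (\<forall>v. \<exists>a\<in>h. \<exists>b\<in>m. v = a + b) \<and>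
     (\<forall>x\<in>h. \<forall>y\<in>h. br x y \<in> h) \<and> (\<forall>x\<in>h. \<forall>y\<in>m. br x y \<in> m)"

definition mpart :: "'g::real_vector set \<Rightarrow> 'g set \<Rightarrow> 'g \<Rightarrow> 'g" where
  "mpart h m v = (THE b. b \<in> m \<and> v - b \<in> h)"

definition hpart :: "'g::real_vector set \<Rightarrow> 'g set \<Rightarrow> 'g \<Rightarrow> 'g" where
  "hpart h m v = v - mpart h m v"

text \<open>Inner product on m (given as a bilinear form on g, only its restriction to m matters).\<close>
definition inner_on :: "'g::real_vector set \<Rightarrow> ('g \<Rightarrow> 'g \<Rightarrow> real) \<Rightarrow> bool" where
  "inner_on m ip \<longleftrightarrow> bilinear ip \<and> (\<forall>x\<in>m. \<forall>y\<in>m. ip x y = ip y x) \<and>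
     (\<forall>x\<in>m. x \<noteq> 0 \<longrightarrow> ip x x > 0)"

text \<open>ad(h)-invariance of a bilinear form on m (infinitesimal form of Ad(H)-invariance).\<close>
definition ad_h_invariant :: "('g::real_vector \<Rightarrow> 'g \<Rightarrow> 'g) \<Rightarrow> 'g set \<Rightarrow> 'g set \<Rightarrow> ('g \<Rightarrow> 'g \<Rightarrow> real) \<Rightarrow> bool" where
  "ad_h_invariant br h m B \<longleftrightarrow> (\<forall>z\<in>h. \<forall>x\<in>m. \<forall>y\<in>m. B (br z x) y + B x (br z y) = 0)"

definition lc_prod :: "('g::real_vector \<Rightarrow> 'g \<Rightarrow> 'g) \<Rightarrow> 'g set \<Rightarrow> 'g set \<Rightarrow> ('g \<Rightarrow> 'g \<Rightarrow> real) \<Rightarrow> 'g \<Rightarrow> 'g \<Rightarrow> 'g" where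
  "lc_prod br h m ip x y = (THE a. a \<in> m \<and> (\<forall>z\<in>m.
      2 * ip a z = ip (mpart h m (br x y)) z - ip x (mpart h m (br y z)) - ip (mpart h m (br x z)) y))"

text \<open>Difference curvature tensor R^d = R - R^0 at eH.\<close>
definition diff_curv :: "('g::real_vector \<Rightarrow> 'g \<Rightarrow> 'g) \<Rightarrow> 'g set \<Rightarrow> 'g set \<Rightarrow> ('g \<Rightarrow> 'g \<Rightarrow> real) \<Rightarrow> 'g \<Rightarrow> 'g \<Rightarrow> 'g \<Rightarrow> 'g" where
  "diff_curv br h m ip x y z = (let \<alpha> = lc_prod br h m ip in
      \<alpha> x (\<alpha> y z) - \<alpha> y (\<alpha> x z) - \<alpha> (mpart h m (br x y)) z)"

text \<open>Difference sectional curvature K^d of the plane spanned by an orthonormal pair {x,y}.\<close>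
definition diff_sec_curv :: "('g::real_vector \<Rightarrow> 'g \<Rightarrow> 'g) \<Rightarrow> 'g set \<Rightarrow> 'g set \<Rightarrow> ('g \<Rightarrow> 'g \<Rightarrow> real) \<Rightarrow> 'g \<Rightarrow> 'g \<Rightarrow> real" where
  "diff_sec_curv br h m ip x y = ip (diff_curv br h m ip x y y) x"

definition orthonormal_pair :: "'g::real_vector set \<Rightarrow> ('g \<Rightarrow> 'g \<Rightarrow> real) \<Rightarrow> 'g \<Rightarrow> 'g \<Rightarrow> bool" where
  "orthonormal_pair m ip x y \<longleftrightarrow> x \<in> m \<and> y \<in> m \<and> ip x x = 1 \<and> ip y y = 1 \<and> ip x y = 0"

text \<open>Covariant derivative at eH of the G-invariant symmetric tensor field corresponding to A:
  (\<nabla>_X A)(Y,Z) = - A(alpha(X,Y),Z) - A(Y,alpha(X,Z)).\<close>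
definition nabla_tensor :: "('g::real_vector \<Rightarrow> 'g \<Rightarrow> 'g) \<Rightarrow> 'g set \<Rightarrow> 'g set \<Rightarrow> ('g \<Rightarrow> 'g \<Rightarrow> real) \<Rightarrow> ('g \<Rightarrow> 'g \<Rightarrow> real) \<Rightarrow> 'g \<Rightarrow> 'g \<Rightarrow> 'g \<Rightarrow> real" where
  "nabla_tensor br h m ip A x y z = - A (lc_prod br h m ip x y) z - A y (lc_prod br h m ip x z)"

text \<open>G-invariant Codazzi tensor field, described by its value A on m.\<close>
definition invariant_codazzi :: "('g::real_vector \<Rightarrow> 'g \<Rightarrow> 'g) \<Rightarrow> 'g set \<Rightarrow> 'g set \<Rightarrow> ('g \<Rightarrow> 'g \<Rightarrow> real) \<Rightarrow> ('g \<Rightarrow> 'g \<Rightarrow> real) \<Rightarrow> bool" where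
  "invariant_codazzi br h m ip A \<longleftrightarrow> bilinear A \<and> (\<forall>x\<in>m. \<forall>y\<in>m. A x y = A y x) \<and>
     ad_h_invariant br h m A \<and>
     (\<forall>x\<in>m. \<forall>y\<in>m. \<forall>z\<in>m. nabla_tensor br h m ip A x y z = nabla_tensor br h m ip A y x z)"

end

theory Submission
  imports Defs
begin


lemma quad_zero:
  fixes b c :: real
  assumes "\<And>t. t * b + t\<^sup>2 * c \<le> 0"
  shows "b = 0"
proof (rule ccontr)
  assume nz: "b \<noteq> 0"
  define t where "t = b / (2 * (\<bar>c\<bar> + 1))"
  have d: "2 * (\<bar>c\<bar> + 1) > 0" by simp
  have "t\<^sup>2 * (-\<bar>c\<bar>) \<le> t\<^sup>2 * c" by (rule mult_left_mono) auto
  then have h1: "t * b + t\<^sup>2 * c \<ge> t * b - t\<^sup>2 * \<bar>c\<bar>" by simp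
  have h2: "t * b - t\<^sup>2 * \<bar>c\<bar> = b\<^sup>2 * (\<bar>c\<bar> + 2) / (2 * (\<bar>c\<bar> + 1))\<^sup>2"
  proof -
    define a where "a = \<bar>c\<bar>"
    have a: "a + 1 > 0" unfolding a_def by simp
    have "t * b - t\<^sup>2 * a = b\<^sup>2 * (a + 2) / (2 * (a + 1))\<^sup>2"
    proof -
      define D where "D = 2 * (a + 1)"
      have Dn: "D \<noteq> 0" using a unfolding D_def by simp
      have tD: "b = t * D" unfolding t_def D_def a_def using d by simp
      have "b\<^sup>2 * (a + 2) / (2 * (a + 1))\<^sup>2 = t\<^sup>2 * (a + 2)"
        unfolding D_def[symmetric] tD using Dn by (simp add: power_mult_distrib)
      moreover have "t * b - t\<^sup>2 * a = t\<^sup>2 * (a + 2)"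
        unfolding tD D_def by (simp add: power2_eq_square algebra_simps)
      ultimately show ?thesis by simp
    qed
    then show ?thesis unfolding a_def .
  qed
  have h3: "b\<^sup>2 * (\<bar>c\<bar> + 2) / (2 * (\<bar>c\<bar> + 1))\<^sup>2 > 0" using nz by (intro divide_pos_pos mult_pos_pos) auto
  show False using assms[of t] h1 h2 h3 by linarith
qed

definition onb :: "'g::real_vector set \<Rightarrow> ('g \<Rightarrow> 'g \<Rightarrow> real) \<Rightarrow> ('g \<Rightarrow> 'g \<Rightarrow> real) \<Rightarrow> 'g set \<Rightarrow> ('g \<Rightarrow> real) \<Rightarrow> bool" where
  "onb m ip B E L \<longleftrightarrow> finite E \<and> E \<subseteq> m \<and> (\<forall>e\<in>E. \<forall>f\<in>E. ip e f = (if e = f then 1 else 0)) \<and>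
     (\<forall>e\<in>E. \<forall>z\<in>m. B e z = L e * ip e z)"

lemma ip_sum_right:
  assumes "bilinear ip" "finite E"
  shows "ip x (\<Sum>e\<in>E. c e *\<^sub>R f e) = (\<Sum>e\<in>E. c e * ip x (f e))"
  using assms(2) by (induction E) (auto simp: bilinear_radd[OF assms(1)] bilinear_rmul[OF assms(1)] bilinear_rzero[OF assms(1)])

lemma ip_sum_left:
  assumes "bilinear ip" "finite E"
  shows "ip (\<Sum>e\<in>E. c e *\<^sub>R f e) x = (\<Sum>e\<in>E. c e * ip (f e) x)"
  using assms(2) by (induction E) (auto simp: bilinear_ladd[OF assms(1)] bilinear_lmul[OF assms(1)] bilinear_lzero[OF assms(1)])

lemma onb_coord:
  assumes "bilinear ip" "onb m ip B E L" "g \<in> E"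
  shows "ip g (\<Sum>e\<in>E. c e *\<^sub>R e) = c g"
proof -
  have fin: "finite E" using assms(2) by (simp add: onb_def)
  have "ip g (\<Sum>e\<in>E. c e *\<^sub>R e) = (\<Sum>e\<in>E. c e * ip g e)" by (rule ip_sum_right[OF assms(1) fin])
  also have "\<dots> = (\<Sum>e\<in>E. if e = g then c e else 0)"
    using assms(2,3) by (intro sum.cong) (auto simp: onb_def)
  also have "\<dots> = c g" using fin assms(3) by simp
  finally show ?thesis .
qed

lemma onb_independent:
  assumes "bilinear ip" "onb m ip B E L"
  shows "independent E"
proof
  assume "dependent E"
  then obtain t u v where t: "finite t" "t \<subseteq> E" "(\<Sum>v\<in>t. u v *\<^sub>R v) = 0" and v: "v \<in> t" "u v \<noteq> 0"
    unfolding dependent_explicit by blast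
  have "onb m ip B t L" using assms(2) t(1,2) unfolding onb_def by (auto simp: subset_iff)
  from onb_coord[OF assms(1) this v(1), of u] t(3) have "u v = 0"
    by (simp add: bilinear_rzero[OF assms(1)])
  with v show False by simp
qed

lemma onb_extend:
  fixes m :: "'g::euclidean_space set"
  assumes sm: "subspace m" and ipb: "bilinear ip"
    and ipsym: "\<forall>x\<in>m. \<forall>y\<in>m. ip x y = ip y x"
    and ippos: "\<forall>x\<in>m. x \<noteq> 0 \<longrightarrow> ip x x > 0"
    and Bb: "bilinear B" and Bsym: "\<forall>x\<in>m. \<forall>y\<in>m. B x y = B y x"
    and o: "onb m ip B E L" and z: "z \<in> m" "z \<noteq> (\<Sum>e\<in>E. ip e z *\<^sub>R e)"
  shows "\<exists>x lam. x \<notin> E \<and> onb m ip B (insert x E) (L(x := lam))"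
proof -
  have fin: "finite E" and Em: "E \<subseteq> m" and orth: "\<forall>e\<in>E. \<forall>f\<in>E. ip e f = (if e = f then 1 else 0)"
    and eigE: "\<forall>e\<in>E. \<forall>z\<in>m. B e z = L e * ip e z" using o by (auto simp: onb_def)
  define W where "W = {w\<in>m. \<forall>f\<in>E. ip f w = 0}"
  define P where "P y = (\<Sum>e\<in>E. ip e y *\<^sub>R e)" for y
  have Pm: "P y \<in> m" for y unfolding P_def
    using Em by (intro subspace_sum[OF sm] subspace_scale[OF sm]) auto
  have ipP: "ip f (P y) = ip f y" if "f \<in> E" for f y
    unfolding P_def using onb_coord[OF ipb o that] .
  have proj: "y - P y \<in> W" if "y \<in> m" for y
    unfolding W_def using subspace_diff[OF sm that Pm] ipP
    by (auto simp: bilinear_rsub[OF ipb])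
  have subW: "subspace W"
    unfolding subspace_def W_def
    using subspace_0[OF sm] subspace_add[OF sm] subspace_scale[OF sm]
    by (auto simp: bilinear_rzero[OF ipb] bilinear_radd[OF ipb] bilinear_rmul[OF ipb])
  have Wm: "W \<subseteq> m" unfolding W_def by auto
  have clW: "closed W" by (rule closed_subspace[OF subW])
  define w0 where "w0 = z - P z"
  have w0W: "w0 \<in> W" unfolding w0_def by (rule proj[OF z(1)])
  have w0nz: "w0 \<noteq> 0" using z(2) unfolding w0_def P_def by simp
  define K where "K = sphere (0::'g) 1 \<inter> W"
  have cK: "compact K" unfolding K_def using clW by (intro compact_Int_closed) auto
  have nK: "(1 / norm w0) *\<^sub>R w0 \<in> K"
    unfolding K_def using w0nz subspace_scale[OF subW w0W] by auto
  define q where "q x = B x x / ip x x" for x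
  have Bc: "continuous_on K (\<lambda>x. B x x)"
    using bounded_bilinear.continuous_on[OF iffD1[OF bilinear_conv_bounded_bilinear Bb] continuous_on_id continuous_on_id]
    by simp
  have ipc: "continuous_on K (\<lambda>x. ip x x)"
    using bounded_bilinear.continuous_on[OF iffD1[OF bilinear_conv_bounded_bilinear ipb] continuous_on_id continuous_on_id]
    by simp
  have Kpos: "ip x x > 0" if "x \<in> K" for x
  proof -
    have "x \<in> m" "x \<noteq> 0" using that Wm unfolding K_def by auto
    then show ?thesis using ippos by auto
  qed
  have qc: "continuous_on K q" unfolding q_def
    using Kpos by (intro continuous_on_divide Bc ipc) force
  obtain x0 where x0K: "x0 \<in> K" and x0max: "\<forall>y\<in>K. q y \<le> q x0"
    using continuous_attains_sup[OF cK _ qc] nK by blast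
  have qhom: "q (c *\<^sub>R w) = q w" if "c \<noteq> 0" for c w
    unfolding q_def using that
    by (simp add: bilinear_lmul[OF Bb] bilinear_rmul[OF Bb] bilinear_lmul[OF ipb] bilinear_rmul[OF ipb])
  have qmax: "q w \<le> q x0" if "w \<in> W" "w \<noteq> 0" for w
  proof -
    have "(1 / norm w) *\<^sub>R w \<in> K" unfolding K_def using that subspace_scale[OF subW that(1)] by auto
    then have "q ((1 / norm w) *\<^sub>R w) \<le> q x0" using x0max by blast
    then show ?thesis using qhom[of "1 / norm w" w] that by simp
  qed
  have x0W: "x0 \<in> W" using x0K unfolding K_def by auto
  have x0pos: "ip x0 x0 > 0" using Kpos[OF x0K] .
  define s where "s = sqrt (ip x0 x0)"
  have spos: "s > 0" unfolding s_def using x0pos by simp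
  have s2: "s * s = ip x0 x0" unfolding s_def using x0pos by simp
  define x where "x = (1 / s) *\<^sub>R x0"
  define lam where "lam = q x0"
  have xW: "x \<in> W" unfolding x_def by (rule subspace_scale[OF subW x0W])
  have xm: "x \<in> m" using xW Wm by auto
  have xx: "ip x x = 1" unfolding x_def using spos s2 x0pos
    by (simp add: bilinear_lmul[OF ipb] bilinear_rmul[OF ipb])
  have qx: "q x = lam" unfolding lam_def x_def using spos by (intro qhom) simp
  have Bxx: "B x x = lam" using qx xx unfolding q_def by simp
  have le: "B w w \<le> lam * ip w w" if "w \<in> W" for w
  proof (cases "w = 0")
    case True then show ?thesis by (simp add: bilinear_lzero[OF Bb] bilinear_lzero[OF ipb])
  next
    case False
    have pw: "ip w w > 0" using that False Wm ippos by auto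
    have "B w w / ip w w \<le> lam" using qmax[OF that False] unfolding q_def lam_def by simp
    then show ?thesis using pw by (simp add: divide_le_eq mult.commute)
  qed
  have eigW: "B x v = lam * ip x v" if vW: "v \<in> W" for v
  proof -
    have vm: "v \<in> m" using vW Wm by auto
    have "2 * (B x v - lam * ip x v) = 0"
    proof (rule quad_zero)
      fix t :: real
      have "x + t *\<^sub>R v \<in> W" using subspace_add[OF subW xW subspace_scale[OF subW vW]] .
      from le[OF this]
      have "B (x + t *\<^sub>R v) (x + t *\<^sub>R v) \<le> lam * ip (x + t *\<^sub>R v) (x + t *\<^sub>R v)" .
      moreover have "B (x + t *\<^sub>R v) (x + t *\<^sub>R v) = B x x + t * B x v + t * B v x + t\<^sup>2 * B v v"
        by (simp add: bilinear_ladd[OF Bb] bilinear_radd[OF Bb] bilinear_lmul[OF Bb] bilinear_rmul[OF Bb] power2_eq_square algebra_simps)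
      moreover have "ip (x + t *\<^sub>R v) (x + t *\<^sub>R v) = ip x x + t * ip x v + t * ip v x + t\<^sup>2 * ip v v"
        by (simp add: bilinear_ladd[OF ipb] bilinear_radd[OF ipb] bilinear_lmul[OF ipb] bilinear_rmul[OF ipb] power2_eq_square algebra_simps)
      moreover have "B v x = B x v" using Bsym vm xm by auto
      moreover have "ip v x = ip x v" using ipsym vm xm by auto
      ultimately show "t * (2 * (B x v - lam * ip x v)) + t\<^sup>2 * (B v v - lam * ip v v) \<le> 0"
        using Bxx xx by (simp add: algebra_simps)
    qed
    then show ?thesis by simp
  qed
  have eig: "B x y = lam * ip x y" if ym: "y \<in> m" for y
  proof -
    have xe: "ip e x = 0" if "e \<in> E" for e using xW that unfolding W_def by auto
    have BP: "B x (P y) = 0"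
    proof -
      have "B x (P y) = (\<Sum>e\<in>E. ip e y * B x e)" unfolding P_def by (rule ip_sum_right[OF Bb fin])
      also have "\<dots> = 0" using xe eigE Bsym Em xm by (intro sum.neutral) (auto simp: subset_iff)
      finally show ?thesis .
    qed
    have IP: "ip x (P y) = 0"
    proof -
      have "ip x (P y) = (\<Sum>e\<in>E. ip e y * ip x e)" unfolding P_def by (rule ip_sum_right[OF ipb fin])
      also have "\<dots> = 0" using xe ipsym Em xm by (intro sum.neutral) (auto simp: subset_iff)
      finally show ?thesis .
    qed
    have "B x y = B x (y - P y) + B x (P y)" by (simp add: bilinear_rsub[OF Bb])
    also have "\<dots> = lam * ip x (y - P y)" using eigW[OF proj[OF ym]] BP by simp
    also have "\<dots> = lam * ip x y" using IP by (simp add: bilinear_rsub[OF ipb])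
    finally show ?thesis .
  qed
  have xE: "x \<notin> E"
  proof
    assume "x \<in> E"
    then have "ip x x = 0" using xW unfolding W_def by auto
    then show False using xx by simp
  qed
  have "onb m ip B (insert x E) (L(x := lam))"
    unfolding onb_def
  proof (intro conjI ballI)
    show "finite (insert x E)" using fin by simp
    show "insert x E \<subseteq> m" using Em xm by auto
  next
    fix e f assume e: "e \<in> insert x E" and f: "f \<in> insert x E"
    have xe: "ip e x = 0" if "e \<in> E" for e using xW that unfolding W_def by auto
    show "ip e f = (if e = f then 1 else 0)"
      using e f orth xx xe ipsym xm Em xE by (auto simp: subset_iff)
  next
    fix e y assume e: "e \<in> insert x E" and y: "y \<in> m"
    show "B e y = (L(x := lam)) e * ip e y"
      using e eig[OF y] eigE y xE by auto
  qed
  then show ?thesis using xE by blast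
qed


lemma onb_exists:
  fixes m :: "'g::euclidean_space set"
  assumes sm: "subspace m" and ipb: "bilinear ip"
    and ipsym: "\<forall>x\<in>m. \<forall>y\<in>m. ip x y = ip y x"
    and ippos: "\<forall>x\<in>m. x \<noteq> 0 \<longrightarrow> ip x x > 0"
    and Bb: "bilinear B" and Bsym: "\<forall>x\<in>m. \<forall>y\<in>m. B x y = B y x"
  shows "\<exists>E L. onb m ip B E L \<and> (\<forall>z\<in>m. z = (\<Sum>e\<in>E. ip e z *\<^sub>R e))"
proof -
  have gen: "\<exists>E L. onb m ip B E L \<and> (card E \<ge> k \<or> (\<forall>z\<in>m. z = (\<Sum>e\<in>E. ip e z *\<^sub>R e)))" for k
  proof (induction k)
    case 0
    have "onb m ip B {} (\<lambda>_. 0)" by (simp add: onb_def)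
    then show ?case by blast
  next
    case (Suc k)
    then obtain E L where o: "onb m ip B E L" and c: "card E \<ge> k \<or> (\<forall>z\<in>m. z = (\<Sum>e\<in>E. ip e z *\<^sub>R e))"
      by blast
    show ?case
    proof (cases "\<forall>z\<in>m. z = (\<Sum>e\<in>E. ip e z *\<^sub>R e)")
      case True then show ?thesis using o by blast
    next
      case False
      then obtain z where z: "z \<in> m" "z \<noteq> (\<Sum>e\<in>E. ip e z *\<^sub>R e)" by blast
      from onb_extend[OF sm ipb ipsym ippos Bb Bsym o z] obtain x lam
        where x: "x \<notin> E" "onb m ip B (insert x E) (L(x := lam))" by blast
      have "finite E" using o by (simp add: onb_def)
      then have "card (insert x E) = Suc (card E)" using x(1) by simp
      moreover have "card E \<ge> k" using c False by blast
      ultimately show ?thesis using x(2) by (metis Suc_le_mono)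
    qed
  qed
  obtain E L where o: "onb m ip B E L" and c: "card E \<ge> Suc DIM('g) \<or> (\<forall>z\<in>m. z = (\<Sum>e\<in>E. ip e z *\<^sub>R e))"
    using gen by blast
  have "card E \<le> DIM('g)" using independent_bound[OF onb_independent[OF ipb o]] by simp
  then show ?thesis using o c by auto
qed



locale hsetting =
  fixes br :: "'g::euclidean_space \<Rightarrow> 'g \<Rightarrow> 'g" and h m :: "'g set" and ip A :: "'g \<Rightarrow> 'g \<Rightarrow> real"
  assumes lb: "lie_bracket br" and rd: "reductive_decomp br h m" and io: "inner_on m ip"
    and ic: "invariant_codazzi br h m ip A"
begin

abbreviation "mp \<equiv> mpart h m"
abbreviation "bm x y \<equiv> mpart h m (br x y)"
abbreviation "al \<equiv> lc_prod br h m ip"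

lemma brb: "bilinear br" and brskew: "br x y = - br y x"
  using lb unfolding lie_bracket_def by blast+

lemma sh: "subspace h" and sm: "subspace m" and hm0: "h \<inter> m = {0}"
  and dec: "\<exists>a\<in>h. \<exists>b\<in>m. v = a + b"
  using rd unfolding reductive_decomp_def by blast+

lemma ipb: "bilinear ip" and ipsym: "\<forall>x\<in>m. \<forall>y\<in>m. ip x y = ip y x"
  and ippos: "\<forall>x\<in>m. x \<noteq> 0 \<longrightarrow> ip x x > 0"
  using io unfolding inner_on_def by blast+

lemma Ab: "bilinear A" and Asym: "\<forall>x\<in>m. \<forall>y\<in>m. A x y = A y x"
  and codazzi: "\<forall>x\<in>m. \<forall>y\<in>m. \<forall>z\<in>m. nabla_tensor br h m ip A x y z = nabla_tensor br h m ip A y x z"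
  using ic unfolding invariant_codazzi_def by blast+

lemma mp_uniq0: "b \<in> m \<Longrightarrow> v - b \<in> h \<Longrightarrow> b' \<in> m \<Longrightarrow> v - b' \<in> h \<Longrightarrow> b = b'"
proof -
  assume a: "b \<in> m" "v - b \<in> h" "b' \<in> m" "v - b' \<in> h"
  have 1: "b - b' \<in> m" using subspace_diff[OF sm a(1) a(3)] .
  have e: "(v - b') - (v - b) = b - b'" by simp
  have 2: "b - b' \<in> h" using subspace_diff[OF sh a(4) a(2)] unfolding e .
  have "b - b' \<in> h \<inter> m" using 1 2 by blast
  then have "b - b' = 0" using hm0 by blast
  then show "b = b'" by simp
qed

lemma mp_char: "mp v \<in> m \<and> v - mp v \<in> h"
proof -
  obtain a b where ab: "a \<in> h" "b \<in> m" "v = a + b" using dec by blast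
  have bb: "b \<in> m \<and> v - b \<in> h" using ab by simp
  show ?thesis unfolding mpart_def
    by (rule theI[of _ b]) (use bb mp_uniq0[of _ v b] in blast)+
qed

lemma mp_in: "mp v \<in> m" using mp_char by blast

lemma mp_unique: "b \<in> m \<Longrightarrow> v - b \<in> h \<Longrightarrow> mp v = b"
  using mp_uniq0[of "mp v" v b] mp_char[of v] by blast

lemma mp_add: "mp (v + w) = mp v + mp w"
proof (rule mp_unique)
  show "mp v + mp w \<in> m" using subspace_add[OF sm mp_in mp_in] .
  have "(v - mp v) + (w - mp w) \<in> h" using subspace_add[OF sh] mp_char by blast
  then show "v + w - (mp v + mp w) \<in> h" by (simp add: algebra_simps)
qed

lemma mp_scale: "mp (c *\<^sub>R v) = c *\<^sub>R mp v"
proof (rule mp_unique)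
  show "c *\<^sub>R mp v \<in> m" using subspace_scale[OF sm mp_in] .
  have "c *\<^sub>R (v - mp v) \<in> h" using subspace_scale[OF sh] mp_char by blast
  then show "c *\<^sub>R v - c *\<^sub>R mp v \<in> h" by (simp add: algebra_simps)
qed

lemma mp_linear: "linear mp"
  by (intro linearI mp_add mp_scale)

lemma mp_neg: "mp (- v) = - mp v"
  using linear_neg[OF mp_linear] .

lemma mp_diff: "mp (v - w) = mp v - mp w"
  using linear_diff[OF mp_linear] .

lemma bm_skew: "bm y z = - bm z y"
  using brskew[of y z] by (simp add: mp_neg)

lemma bm_ladd: "bm (x + y) z = bm x z + bm y z"
  by (simp add: bilinear_ladd[OF brb] mp_add)
lemma bm_radd: "bm z (x + y) = bm z x + bm z y"
  by (simp add: bilinear_radd[OF brb] mp_add)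
lemma bm_lmul: "bm (c *\<^sub>R x) z = c *\<^sub>R bm x z"
  by (simp add: bilinear_lmul[OF brb] mp_scale)
lemma bm_rmul: "bm z (c *\<^sub>R x) = c *\<^sub>R bm z x"
  by (simp add: bilinear_rmul[OF brb] mp_scale)

lemmas ipl = bilinear_ladd[OF ipb] bilinear_radd[OF ipb] bilinear_lmul[OF ipb] bilinear_rmul[OF ipb]
  bilinear_lsub[OF ipb] bilinear_rsub[OF ipb] bilinear_lzero[OF ipb] bilinear_rzero[OF ipb]
  bilinear_lneg[OF ipb] bilinear_rneg[OF ipb]

lemma ip_zero_unique: "u \<in> m \<Longrightarrow> (\<And>z. z \<in> m \<Longrightarrow> ip u z = 0) \<Longrightarrow> u = 0"
  using ippos by force

definition phi where "phi x y z = ip (bm x y) z - ip x (bm y z) - ip (bm x z) y"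

lemma phi_lin3: "linear (\<lambda>z. phi x y z)"
  unfolding phi_def by (intro linearI) (simp_all add: ipl bm_radd bm_rmul algebra_simps)

lemma phi_lin1: "linear (\<lambda>x. phi x y z)"
  unfolding phi_def by (intro linearI) (simp_all add: ipl bm_ladd bm_lmul algebra_simps)

lemma phi_lin2: "linear (\<lambda>y. phi x y z)"
  unfolding phi_def by (intro linearI) (simp_all add: ipl bm_ladd bm_lmul bm_radd bm_rmul algebra_simps)

lemma onb0: "\<exists>E L. onb m ip ip E L \<and> (\<forall>z\<in>m. z = (\<Sum>e\<in>E. ip e z *\<^sub>R e))"
  by (rule onb_exists[OF sm ipb ipsym ippos ipb ipsym])

lemma lin_expand:
  assumes "linear (f :: 'g \<Rightarrow> real)" "finite E" "z = (\<Sum>e\<in>E. ip e z *\<^sub>R e)"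
  shows "f z = (\<Sum>e\<in>E. ip e z * f e)"
proof -
  have "f z = f (\<Sum>e\<in>E. ip e z *\<^sub>R e)" using assms(3) by simp
  also have "\<dots> = (\<Sum>e\<in>E. ip e z * f e)"
    by (simp add: linear_sum[OF assms(1)] linear_scale[OF assms(1)])
  finally show ?thesis .
qed

lemma al_exists: "\<exists>a. a \<in> m \<and> (\<forall>z\<in>m. 2 * ip a z = phi x y z)"
proof -
  obtain E L where o: "onb m ip ip E L" and c: "\<forall>z\<in>m. z = (\<Sum>e\<in>E. ip e z *\<^sub>R e)"
    using onb0 by blast
  have fin: "finite E" and Em: "E \<subseteq> m" using o by (auto simp: onb_def)
  define a where "a = (\<Sum>e\<in>E. (phi x y e / 2) *\<^sub>R e)"
  have "a \<in> m" unfolding a_def using Em by (intro subspace_sum[OF sm] subspace_scale[OF sm]) auto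
  moreover have "2 * ip a z = phi x y z" if z: "z \<in> m" for z
  proof -
    have "ip a z = (\<Sum>e\<in>E. (phi x y e / 2) * ip e z)" unfolding a_def by (rule ip_sum_left[OF ipb fin])
    moreover have "phi x y z = (\<Sum>e\<in>E. ip e z * phi x y e)"
      by (rule lin_expand[OF phi_lin3 fin]) (use c z in blast)
    ultimately show ?thesis by (simp add: sum_distrib_left algebra_simps)
  qed
  ultimately show ?thesis by blast
qed

lemma al_uniq0: "a \<in> m \<Longrightarrow> (\<forall>z\<in>m. 2 * ip a z = p z) \<Longrightarrow> b \<in> m \<Longrightarrow> (\<forall>z\<in>m. 2 * ip b z = p z) \<Longrightarrow> a = b"
proof -
  assume a: "a \<in> m" "\<forall>z\<in>m. 2 * ip a z = p z" "b \<in> m" "\<forall>z\<in>m. 2 * ip b z = p z"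
  have "a - b = 0"
  proof (rule ip_zero_unique)
    show "a - b \<in> m" using subspace_diff[OF sm a(1) a(3)] .
    fix z assume z: "z \<in> m"
    have "2 * ip a z = p z" "2 * ip b z = p z" using a(2,4) z by auto
    then show "ip (a - b) z = 0" by (simp add: ipl)
  qed
  then show ?thesis by simp
qed

lemma al_char: "al x y \<in> m \<and> (\<forall>z\<in>m. 2 * ip (al x y) z = phi x y z)"
proof -
  obtain a where a: "a \<in> m \<and> (\<forall>z\<in>m. 2 * ip a z = phi x y z)" using al_exists by blast
  have ex1: "\<exists>!a. a \<in> m \<and> (\<forall>z\<in>m. 2 * ip a z = phi x y z)"
    by (rule ex1I[of _ a]) (use a al_uniq0 in blast)+
  have eq: "al x y = (THE a. a \<in> m \<and> (\<forall>z\<in>m. 2 * ip a z = phi x y z))"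
    unfolding lc_prod_def phi_def by simp
  show ?thesis unfolding eq by (rule theI'[OF ex1])
qed

lemma al_in: "al x y \<in> m" using al_char by blast
lemma al_eq: "z \<in> m \<Longrightarrow> 2 * ip (al x y) z = phi x y z" using al_char by blast

lemma al_unique: "a \<in> m \<Longrightarrow> (\<And>z. z \<in> m \<Longrightarrow> 2 * ip a z = phi x y z) \<Longrightarrow> al x y = a"
  using al_uniq0[of "al x y" "phi x y" a] al_char by blast

lemma al_bilinear: "bilinear al"
  unfolding bilinear_def
proof (intro conjI allI)
  fix x show "linear (al x)"
  proof (rule linearI)
    fix y y' show "al x (y + y') = al x y + al x y'"
      by (rule al_unique) (auto simp: ipl al_eq linear_add[OF phi_lin2] intro: subspace_add[OF sm] al_in)
  next
    fix c y show "al x (c *\<^sub>R y) = c *\<^sub>R al x y"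
      by (rule al_unique) (auto simp: ipl al_eq linear_scale[OF phi_lin2] intro: subspace_scale[OF sm] al_in)
  qed
next
  fix y show "linear (\<lambda>x. al x y)"
  proof (rule linearI)
    fix x x' show "al (x + x') y = al x y + al x' y"
      by (rule al_unique) (auto simp: ipl al_eq linear_add[OF phi_lin1] intro: subspace_add[OF sm] al_in)
  next
    fix c x show "al (c *\<^sub>R x) y = c *\<^sub>R al x y"
      by (rule al_unique) (auto simp: ipl al_eq linear_scale[OF phi_lin1] intro: subspace_scale[OF sm] al_in)
  qed
qed

lemma al_skew: "y \<in> m \<Longrightarrow> z \<in> m \<Longrightarrow> ip (al x y) z = - ip y (al x z)"
proof -
  assume y: "y \<in> m" and z: "z \<in> m"
  have "ip y (al x z) = ip (al x z) y" using ipsym y al_in by blast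
  moreover have "2 * ip (al x y) z = phi x y z" using al_eq[OF z] .
  moreover have "2 * ip (al x z) y = phi x z y" using al_eq[OF y] .
  moreover have "phi x y z + phi x z y = 0"
    unfolding phi_def using bm_skew[of y z] by (simp add: ipl)
  ultimately show ?thesis by linarith
qed

lemma al_torsion: "x \<in> m \<Longrightarrow> y \<in> m \<Longrightarrow> al x y - al y x = bm x y"
proof -
  assume x: "x \<in> m" and y: "y \<in> m"
  have "al x y - al y x - bm x y = 0"
  proof (rule ip_zero_unique)
    show "al x y - al y x - bm x y \<in> m" using al_in mp_in sm by (meson subspace_diff)
  next
    fix z assume z: "z \<in> m"
    have "2 * ip (al x y) z = phi x y z" "2 * ip (al y x) z = phi y x z" using al_eq[OF z] by auto
    moreover have "ip y (bm x z) = ip (bm x z) y" using ipsym y mp_in by blast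
    moreover have "ip (bm y z) x = ip x (bm y z)" using ipsym x mp_in by blast
    moreover have "bm y x = - bm x y" by (rule bm_skew)
    ultimately have "ip (al x y) z - ip (al y x) z - ip (bm x y) z = 0"
      unfolding phi_def by (simp add: ipl)
    then show "ip (al x y - al y x - bm x y) z = 0" by (simp add: ipl)
  qed
  then show ?thesis by simp
qed

end



lemma term_alg:
  fixes li lj lk t a b c d e :: real
  assumes ne: "li \<noteq> lj" and h1: "t = (lj - lk) * a" and h2: "t = (li - lk) * b"
    and h3: "t = (lj - li) * c" and h4: "(lk - lj) * d = 0" and h5: "(lk - li) * e = 0"
  shows "- (d * e) + a * b - (a - b) * c = 2 * t\<^sup>2 / ((li - lk) * (lj - lk))"
proof -
  have de: "d * e = 0" using ne h4 h5 by auto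
  consider "lk = li" | "lk = lj" | "lk \<noteq> li" "lk \<noteq> lj" by blast
  then show ?thesis
  proof cases
    case 1
    then have "t = 0" using h2 by simp
    moreover have "lj - lk \<noteq> 0" "lj - li \<noteq> 0" using 1 ne by auto
    ultimately have "a = 0" "c = 0" using h1 h3 by auto
    then show ?thesis using de 1 by simp
  next
    case 2
    then have "t = 0" using h1 by simp
    moreover have "li - lk \<noteq> 0" "lj - li \<noteq> 0" using 2 ne by auto
    ultimately have "b = 0" "c = 0" using h2 h3 by auto
    then show ?thesis using de 2 by simp
  next
    case 3
    then have n1: "lj - lk \<noteq> 0" and n2: "li - lk \<noteq> 0" and n3: "lj - li \<noteq> 0" using ne by auto
    define P where "P = li - lk"
    define Q where "Q = lj - lk"
    have R: "lj - li = Q - P" unfolding P_def Q_def by simp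
    have nP: "P \<noteq> 0" using n2 unfolding P_def .
    have nQ: "Q \<noteq> 0" using n1 unfolding Q_def .
    have nR: "Q - P \<noteq> 0" using n3 unfolding R .
    have a: "a = t / Q" using h1 nQ unfolding Q_def by simp
    have b: "b = t / P" using h2 nP unfolding P_def by simp
    have c: "c = t / (Q - P)" using h3 nR R by simp
    have ab: "a * b = t\<^sup>2 / (P * Q)" unfolding a b by (simp add: power2_eq_square)
    have amb: "a - b = - (t * (Q - P)) / (P * Q)" unfolding a b using nP nQ
      by (simp add: field_simps)
    have "(a - b) * c = - (t\<^sup>2 / (P * Q))" unfolding amb c using nP nQ nR
      by (simp add: power2_eq_square)
    then have "a * b - (a - b) * c = 2 * t\<^sup>2 / (P * Q)" using ab by simp
    then have "a * b - (a - b) * c = 2 * t\<^sup>2 / ((li - lk) * (lj - lk))" unfolding P_def Q_def .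
    then show ?thesis using de by (simp only: minus_zero add_0_left)
  qed
qed


context hsetting
begin

abbreviation "TT \<equiv> nabla_tensor br h m ip A"

lemmas Al = bilinear_ladd[OF Ab] bilinear_radd[OF Ab] bilinear_lmul[OF Ab] bilinear_rmul[OF Ab]
lemmas all = bilinear_ladd[OF al_bilinear] bilinear_radd[OF al_bilinear] bilinear_lmul[OF al_bilinear]
  bilinear_rmul[OF al_bilinear] bilinear_lsub[OF al_bilinear]

lemma TT_lin3: "linear (\<lambda>z. TT x y z)"
  unfolding nabla_tensor_def by (intro linearI) (simp_all add: Al all algebra_simps)
lemma TT_lin2: "linear (\<lambda>y. TT x y z)"
  unfolding nabla_tensor_def by (intro linearI) (simp_all add: Al all algebra_simps)
lemma TT_lin1: "linear (\<lambda>x. TT x y z)"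
  unfolding nabla_tensor_def by (intro linearI) (simp_all add: Al all algebra_simps)

lemma G_skew: "j \<in> m \<Longrightarrow> k \<in> m \<Longrightarrow> ip (al i j) k = - ip (al i k) j"
proof -
  assume j: "j \<in> m" and k: "k \<in> m"
  have "ip (al i j) k = - ip j (al i k)" using al_skew[OF j k] .
  moreover have "ip j (al i k) = ip (al i k) j" using ipsym j al_in by blast
  ultimately show ?thesis by simp
qed

theorem main:
  assumes nz: "\<exists>x\<in>m. \<exists>y\<in>m. \<exists>z\<in>m. TT x y z \<noteq> 0"
  shows "(\<exists>x y. orthonormal_pair m ip x y \<and> diff_sec_curv br h m ip x y > 0) \<and>
         (\<exists>x y. orthonormal_pair m ip x y \<and> diff_sec_curv br h m ip x y < 0)"
proof -
  obtain E L where o: "onb m ip A E L" and cpl: "\<forall>z\<in>m. z = (\<Sum>e\<in>E. ip e z *\<^sub>R e)"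
    using onb_exists[OF sm ipb ipsym ippos Ab Asym] by blast
  have fin: "finite E" and Em: "E \<subseteq> m" and orth: "\<forall>e\<in>E. \<forall>f\<in>E. ip e f = (if e = f then 1 else 0)"
    and eigA: "\<forall>e\<in>E. \<forall>z\<in>m. A e z = L e * ip e z" using o by (auto simp: onb_def)
  have Em': "e \<in> m" if "e \<in> E" for e using Em that by blast
  define G where "G i j k = ip (al i j) k" for i j k
  have T_eig: "TT i j k = (L j - L k) * G i j k" if j: "j \<in> E" and k: "k \<in> E" for i j k
  proof -
    have "A (al i j) k = A k (al i j)" using Asym al_in Em'[OF k] by blast
    also have "\<dots> = L k * ip k (al i j)" using eigA k al_in by blast
    also have "ip k (al i j) = G i j k" unfolding G_def using ipsym al_in Em'[OF k] by metis
    finally have 1: "A (al i j) k = L k * G i j k" .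
    have "A j (al i k) = L j * ip j (al i k)" using eigA j al_in by blast
    also have "ip j (al i k) = - G i j k" unfolding G_def using al_skew[OF Em'[OF j] Em'[OF k]] by simp
    finally have 2: "A j (al i k) = - (L j * G i j k)" by simp
    show ?thesis unfolding nabla_tensor_def 1 2 by (simp add: algebra_simps)
  qed
  have Gsk: "G i j k = - G i k j" if "j \<in> E" "k \<in> E" for i j k
    unfolding G_def using G_skew[OF Em'[OF that(1)] Em'[OF that(2)]] .
  have s12: "TT i j k = TT j i k" if "i \<in> E" "j \<in> E" "k \<in> E" for i j k
    using codazzi Em' that by blast
  have s23: "TT i j k = TT i k j" if "j \<in> E" "k \<in> E" for i j k
  proof -
    have "TT i j k = (L j - L k) * G i j k" using T_eig[OF that, of i] .
    moreover have "TT i k j = (L k - L j) * G i k j" using T_eig[OF that(2,1), of i] .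
    moreover have "G i k j = - G i j k" using Gsk[OF that, of i] by simp
    ultimately show ?thesis by (simp add: algebra_simps)
  qed
  have perm: "TT j i k = TT i j k \<and> TT i k j = TT i j k \<and> TT k j i = TT i j k \<and>
      TT j k i = TT i j k \<and> TT k i j = TT i j k" if "i \<in> E" "j \<in> E" "k \<in> E" for i j k
    using s12 s23 that by metis
  have Tdist: "L i \<noteq> L j \<and> L i \<noteq> L k \<and> L j \<noteq> L k"
    if "i \<in> E" "j \<in> E" "k \<in> E" "TT i j k \<noteq> 0" for i j k
  proof -
    have "TT i j k = (L j - L k) * G i j k" using T_eig that by blast
    moreover have "TT i j k = (L i - L k) * G j i k" using T_eig that perm by metis
    moreover have "TT i j k = (L i - L j) * G k i j" using T_eig that perm by metis
    ultimately show ?thesis using that(4) by auto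
  qed
  have parseval: "ip u v = (\<Sum>k\<in>E. ip u k * ip v k)" if "u \<in> m" "v \<in> m" for u v
  proof -
    have "ip u v = ip u (\<Sum>k\<in>E. ip k v *\<^sub>R k)" using cpl that(2) by metis
    also have "\<dots> = (\<Sum>k\<in>E. ip k v * ip u k)" by (rule ip_sum_right[OF ipb fin])
    also have "\<dots> = (\<Sum>k\<in>E. ip u k * ip v k)"
      using ipsym that(2) Em' by (intro sum.cong) auto
    finally show ?thesis .
  qed
  define g where "g i j k = - (G j j k * G i i k) + G i j k * G j i k - (G i j k - G j i k) * G k j i" for i j k
  have K3: "diff_sec_curv br h m ip i j = (\<Sum>k\<in>E. g i j k)" if i: "i \<in> E" and j: "j \<in> E" for i j
  proof -
    have im: "i \<in> m" and jm: "j \<in> m" using i j Em' by auto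
    have t1: "ip (al i (al j j)) i = - (\<Sum>k\<in>E. G j j k * G i i k)"
    proof -
      have "ip (al i (al j j)) i = - ip (al j j) (al i i)" using al_skew[OF al_in im] .
      also have "ip (al j j) (al i i) = (\<Sum>k\<in>E. G j j k * G i i k)"
        unfolding G_def by (rule parseval[OF al_in al_in])
      finally show ?thesis .
    qed
    have t2: "ip (al j (al i j)) i = - (\<Sum>k\<in>E. G i j k * G j i k)"
    proof -
      have "ip (al j (al i j)) i = - ip (al i j) (al j i)" using al_skew[OF al_in im] .
      also have "ip (al i j) (al j i) = (\<Sum>k\<in>E. G i j k * G j i k)"
        unfolding G_def by (rule parseval[OF al_in al_in])
      finally show ?thesis .
    qed
    have t3: "ip (al (bm i j) j) i = (\<Sum>k\<in>E. (G i j k - G j i k) * G k j i)"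
    proof -
      define c where "c = al i j - al j i"
      have cb: "bm i j = c" unfolding c_def using al_torsion[OF im jm] by simp
      have cm: "c \<in> m" unfolding c_def using al_in sm by (meson subspace_diff)
      have "al c j = al (\<Sum>k\<in>E. ip k c *\<^sub>R k) j" using cpl cm by metis
      also have "\<dots> = (\<Sum>k\<in>E. ip k c *\<^sub>R al k j)"
      proof -
        have lin: "linear (\<lambda>x. al x j)" using al_bilinear unfolding bilinear_def by blast
        show ?thesis by (simp add: linear_sum[OF lin] linear_scale[OF lin])
      qed
      finally have "ip (al c j) i = ip (\<Sum>k\<in>E. ip k c *\<^sub>R al k j) i" by simp
      also have "\<dots> = (\<Sum>k\<in>E. ip k c * ip (al k j) i)" by (rule ip_sum_left[OF ipb fin])
      also have "\<dots> = (\<Sum>k\<in>E. (G i j k - G j i k) * G k j i)"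
      proof (rule sum.cong)
        fix k assume k: "k \<in> E"
        have "ip k c = ip c k" using ipsym cm Em'[OF k] by blast
        then have "ip k c = G i j k - G j i k" unfolding G_def c_def by (simp add: ipl)
        then show "ip k c * ip (al k j) i = (G i j k - G j i k) * G k j i" unfolding G_def by simp
      qed simp
      finally show ?thesis unfolding cb .
    qed
    have "diff_sec_curv br h m ip i j = ip (al i (al j j)) i - ip (al j (al i j)) i - ip (al (bm i j) j) i"
      unfolding diff_sec_curv_def diff_curv_def Let_def by (simp add: ipl)
    also have "\<dots> = (\<Sum>k\<in>E. g i j k)"
      unfolding t1 t2 t3 g_def by (simp add: sum.distrib sum_subtractf)
    finally show ?thesis .
  qed
  have K4: "g i j k = 2 * (TT i j k)\<^sup>2 / ((L i - L k) * (L j - L k))"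
    if i: "i \<in> E" and j: "j \<in> E" and k: "k \<in> E" and ne: "L i \<noteq> L j" for i j k
  proof -
    have h1: "TT i j k = (L j - L k) * G i j k" using T_eig j k by blast
    have h2: "TT i j k = (L i - L k) * G j i k" using T_eig i k perm[OF i j k] by metis
    have h3: "TT i j k = (L j - L i) * G k j i" using T_eig i j perm[OF i j k] by metis
    have h4: "(L k - L j) * G j j k = 0"
    proof -
      have "TT j k j = TT k j j" using s12 j k by blast
      also have "\<dots> = 0" using T_eig[OF j j] by simp
      finally have "(L k - L j) * G j k j = 0" using T_eig[OF k j, of j] by simp
      then show ?thesis using Gsk[OF j k, of j] by simp
    qed
    have h5: "(L k - L i) * G i i k = 0"
    proof -
      have "TT i k i = TT k i i" using s12 i k by blast
      also have "\<dots> = 0" using T_eig[OF i i] by simp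
      finally have "(L k - L i) * G i k i = 0" using T_eig[OF k i, of i] by simp
      then show ?thesis using Gsk[OF i k, of i] by simp
    qed
    show ?thesis unfolding g_def by (rule term_alg[OF ne h1 h2 h3 h4 h5])
  qed
  have "\<exists>i\<in>E. \<exists>j\<in>E. \<exists>k\<in>E. TT i j k \<noteq> 0"
  proof (rule ccontr)
    assume "\<not> ?thesis"
    then have z0: "TT i j k = 0" if "i \<in> E" "j \<in> E" "k \<in> E" for i j k using that by blast
    obtain x y z where xyz: "x \<in> m" "y \<in> m" "z \<in> m" "TT x y z \<noteq> 0" using nz by blast
    have a1: "TT x j k = 0" if "j \<in> E" "k \<in> E" for j k
    proof -
      have "TT x j k = (\<Sum>i\<in>E. ip i x * TT i j k)"
        by (rule lin_expand[OF TT_lin1 fin]) (use cpl xyz in blast)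
      then show ?thesis using z0 that by simp
    qed
    have a2: "TT x y k = 0" if "k \<in> E" for k
    proof -
      have "TT x y k = (\<Sum>j\<in>E. ip j y * TT x j k)"
        by (rule lin_expand[OF TT_lin2 fin]) (use cpl xyz in blast)
      then show ?thesis using a1 that by simp
    qed
    have "TT x y z = (\<Sum>k\<in>E. ip k z * TT x y k)"
      by (rule lin_expand[OF TT_lin3 fin]) (use cpl xyz in blast)
    then have "TT x y z = 0" using a2 by simp
    then show False using xyz by blast
  qed
  define I where "I = {i\<in>E. \<exists>j\<in>E. \<exists>k\<in>E. TT i j k \<noteq> 0}"
  have finI: "finite I" "I \<noteq> {}" unfolding I_def using fin \<open>\<exists>i\<in>E. _\<close> by auto
  obtain i0 where i0I: "i0 \<in> I" and i0min: "\<forall>i\<in>I. L i0 \<le> L i"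
  proof -
    have "Min (L ` I) \<in> L ` I" using finI by (intro Min_in) auto
    then obtain i0 where "i0 \<in> I" "L i0 = Min (L ` I)" by auto
    moreover have "\<forall>i\<in>I. Min (L ` I) \<le> L i" using finI by auto
    ultimately show ?thesis using that by auto
  qed
  have i0E: "i0 \<in> E" using i0I unfolding I_def by blast
  define J where "J = {j\<in>E. \<exists>k\<in>E. TT i0 j k \<noteq> 0}"
  have finJ: "finite J" "J \<noteq> {}" unfolding J_def using fin i0I unfolding I_def by auto
  obtain j1 where j1J: "j1 \<in> J" and j1min: "\<forall>j\<in>J. L j1 \<le> L j"
  proof -
    have "Min (L ` J) \<in> L ` J" using finJ by (intro Min_in) auto
    then obtain j1 where "j1 \<in> J" "L j1 = Min (L ` J)" by auto
    moreover have "\<forall>j\<in>J. Min (L ` J) \<le> L j" using finJ by auto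
    ultimately show ?thesis using that by auto
  qed
  obtain j2 where j2J: "j2 \<in> J" and j2max: "\<forall>j\<in>J. L j \<le> L j2"
  proof -
    have "Max (L ` J) \<in> L ` J" using finJ by (intro Max_in) auto
    then obtain j2 where "j2 \<in> J" "L j2 = Max (L ` J)" by auto
    moreover have "\<forall>j\<in>J. L j \<le> Max (L ` J)" using finJ by auto
    ultimately show ?thesis using that by auto
  qed
  have inJ: "k \<in> J" if "j \<in> E" "k \<in> E" "TT i0 j k \<noteq> 0" for j k
  proof -
    have "TT i0 k j \<noteq> 0" using that(3) perm[OF i0E that(1,2)] by simp
    then show ?thesis unfolding J_def using that(1,2) by blast
  qed
  have inI: "k \<in> I" if "j \<in> E" "k \<in> E" "TT i0 j k \<noteq> 0" for j k
  proof -
    have "TT k i0 j \<noteq> 0" using that(3) perm[OF i0E that(1,2)] by simp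
    then show ?thesis unfolding I_def using that(1,2) i0E by blast
  qed
  have onp: "orthonormal_pair m ip i0 j" if "j \<in> E" "L i0 \<noteq> L j" for j
    unfolding orthonormal_pair_def using orth i0E that Em' by auto
  have pos: "diff_sec_curv br h m ip i0 j1 > 0"
  proof -
    have j1E: "j1 \<in> E" using j1J unfolding J_def by blast
    obtain k1 where k1: "k1 \<in> E" "TT i0 j1 k1 \<noteq> 0" using j1J unfolding J_def by blast
    have ne: "L i0 \<noteq> L j1" using Tdist[OF i0E j1E k1(1) k1(2)] by blast
    have trm: "g i0 j1 k > 0" if "k \<in> E" "TT i0 j1 k \<noteq> 0" for k
    proof -
      have d: "L i0 \<noteq> L k" "L j1 \<noteq> L k" using Tdist[OF i0E j1E that] by auto
      have "L j1 \<le> L k" using j1min inJ[OF j1E that] by blast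
      moreover have "L i0 \<le> L k" using i0min inI[OF j1E that] by blast
      ultimately have "(L i0 - L k) * (L j1 - L k) > 0" using d by (intro mult_neg_neg) auto
      moreover have "2 * (TT i0 j1 k)\<^sup>2 > 0" using that(2) by simp
      ultimately show ?thesis unfolding K4[OF i0E j1E that(1) ne] by simp
    qed
    have "(\<Sum>k\<in>E. g i0 j1 k) > 0"
    proof (rule sum_pos2[OF fin k1(1)])
      show "0 < g i0 j1 k1" using trm k1 by blast
      fix k assume k: "k \<in> E"
      show "0 \<le> g i0 j1 k"
      proof (cases "TT i0 j1 k = 0")
        case True then show ?thesis unfolding K4[OF i0E j1E k ne] by simp
      next
        case False then show ?thesis using trm[OF k] by simp
      qed
    qed
    then show ?thesis using K3[OF i0E j1E] by simp
  qed
  have neg: "diff_sec_curv br h m ip i0 j2 < 0"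
  proof -
    have j2E: "j2 \<in> E" using j2J unfolding J_def by blast
    obtain k1 where k1: "k1 \<in> E" "TT i0 j2 k1 \<noteq> 0" using j2J unfolding J_def by blast
    have ne: "L i0 \<noteq> L j2" using Tdist[OF i0E j2E k1(1) k1(2)] by blast
    have trm: "g i0 j2 k < 0" if "k \<in> E" "TT i0 j2 k \<noteq> 0" for k
    proof -
      have d: "L i0 \<noteq> L k" "L j2 \<noteq> L k" using Tdist[OF i0E j2E that] by auto
      have "L k \<le> L j2" using j2max inJ[OF j2E that] by blast
      moreover have "L i0 \<le> L k" using i0min inI[OF j2E that] by blast
      ultimately have "(L i0 - L k) * (L j2 - L k) < 0" using d by (intro mult_neg_pos) auto
      moreover have "2 * (TT i0 j2 k)\<^sup>2 > 0" using that(2) by simp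
      ultimately show ?thesis unfolding K4[OF i0E j2E that(1) ne] by (simp add: divide_pos_neg)
    qed
    have "(\<Sum>k\<in>E. - g i0 j2 k) > 0"
    proof (rule sum_pos2[OF fin k1(1)])
      show "0 < - g i0 j2 k1" using trm k1 by simp
      fix k assume k: "k \<in> E"
      show "0 \<le> - g i0 j2 k"
      proof (cases "TT i0 j2 k = 0")
        case True then show ?thesis unfolding K4[OF i0E j2E k ne] by simp
      next
        case False then show ?thesis using trm[OF k] by simp
      qed
    qed
    then show ?thesis using K3[OF i0E j2E] by (simp add: sum_negf)
  qed
  have j1E: "j1 \<in> E" using j1J unfolding J_def by blast
  have j2E: "j2 \<in> E" using j2J unfolding J_def by blast
  have "L i0 \<noteq> L j1" "L i0 \<noteq> L j2"
    using j1J j2J Tdist[OF i0E j1E] Tdist[OF i0E j2E] unfolding J_def by blast+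
  then show ?thesis using pos neg onp j1E j2E by blast
qed

end


theorem proposition3p1:
  fixes br :: "'g::euclidean_space \<Rightarrow> 'g \<Rightarrow> 'g"
    and h m :: "'g set"
    and ip A :: "'g \<Rightarrow> 'g \<Rightarrow> real"
  assumes "lie_bracket br"
    and "reductive_decomp br h m"
    and "inner_on m ip"
    and "ad_h_invariant br h m ip"
    and "invariant_codazzi br h m ip A"
    and "\<exists>x\<in>m. \<exists>y\<in>m. \<exists>z\<in>m. nabla_tensor br h m ip A x y z \<noteq> 0"
  shows "(\<exists>x y. orthonormal_pair m ip x y \<and> diff_sec_curv br h m ip x y > 0) \<and>
         (\<exists>x y. orthonormal_pair m ip x y \<and> diff_sec_curv br h m ip x y < 0)"
proof -
  interpret hsetting br h m ip A
    using assms(1,2,3,5) by unfold_locales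
  show ?thesis using main assms(6) by blast
qed

end
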